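(* Let $(\mathcal{J}_g)_{g\in[G]}$ be a partition of $[p]$ into nonempty sets, $p_g=|\mathcal{J}_g|$, and let $\mathcal{S}=\{M\in\mathbb{R}^{p\times(n-1)}:\|M\|_{\mathrm F}\le1\}$. For $T\in\mathbb{R}^{p\times(n-1)}$ and $\lambda>0$ define $R^*\in\mathbb{R}^{p\times(n-1)}$ by $R^*_{\mathcal{J}_g,t}=T_{\mathcal{J}_g,t}\min\bigl\{\lambda p_g^{1/2}/\|T_{\mathcal{J}_g,t}\|_2,1\bigr\}$ (with $R^*_{\mathcal{J}_g,t}=0$ if $T_{\mathcal{J}_g,t}=0$), and assume $T\ne R^*$. Then \[ \operatorname*{argmax}_{M\in\mathcal{S}}\bigl\{\langle T,M\rangle-\lambda\|M\|_{\mathrm{grp}}\bigr\}=\Bigl\{\frac{T-R^*}{\|T-R^*\|_{\mathrm F}}\Bigr\}. \]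
   Context: $\|M\|_{\mathrm{grp}}=\sum_{g=1}^Gp_g^{1/2}\sum_{t=1}^{n-1}\|M_{\mathcal{J}_g,t}\|_2$, where $M_{\mathcal{J}_g,t}$ is the vector of entries of the $t$th column of $M$ with rows in $\mathcal{J}_g$; $\langle A,B\rangle=\mathrm{tr}(A^\top B)$. *)

theory Defs
  imports "HOL-Analysis.Analysis"
begin

text \<open>Matrices in R^{p x (n-1)} are rendered as real ^ 'c ^ 'p, rows indexed by the finite
type 'p (so p = CARD('p)), columns by the finite type 'c (so n-1 = CARD('c)).
On this type, norm is the Frobenius norm and the inner product is tr(A^T B).\<close>

definition is_row_partition :: "'p::finite set set \<Rightarrow> bool" where
  "is_row_partition P \<longleftrightarrow> (\<forall>g\<in>P. g \<noteq> {}) \<and> \<Union>P = UNIV \<and>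
     (\<forall>g\<in>P. \<forall>h\<in>P. g \<noteq> h \<longrightarrow> g \<inter> h = {})"

definition block_norm :: "real ^ 'c ^ 'p \<Rightarrow> 'p set \<Rightarrow> 'c \<Rightarrow> real" where
  "block_norm M g t = sqrt (\<Sum>j\<in>g. (M $ j $ t)^2)"

definition grp_norm :: "'p::finite set set \<Rightarrow> real ^ 'c::finite ^ 'p \<Rightarrow> real" where
  "grp_norm P M = (\<Sum>g\<in>P. sqrt (real (card g)) * (\<Sum>t\<in>UNIV. block_norm M g t))"

definition group_of :: "'p set set \<Rightarrow> 'p \<Rightarrow> 'p set" where
  "group_of P j = (THE g. g \<in> P \<and> j \<in> g)"

definition Rstar :: "'p::finite set set \<Rightarrow> real \<Rightarrow> real ^ 'c::finite ^ 'p \<Rightarrow> real ^ 'c ^ 'p" where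
  "Rstar P lam T = (\<chi> j t. let g = group_of P j in
      if block_norm T g t = 0 then 0
      else T $ j $ t * min (lam * sqrt (real (card g)) / block_norm T g t) 1)"

definition unit_frob_ball :: "(real ^ 'c::finite ^ 'p::finite) set" where
  "unit_frob_ball = {M. norm M \<le> 1}"

end

theory Submission
  imports Defs
begin

definition bi :: "real ^ 'c ^ 'p \<Rightarrow> real ^ 'c ^ 'p \<Rightarrow> 'p set \<Rightarrow> 'c \<Rightarrow> real" where
  "bi A B g t = (\<Sum>j\<in>g. A $ j $ t * B $ j $ t)"

definition kf :: "real \<Rightarrow> real ^ 'c ^ 'p \<Rightarrow> 'p set \<Rightarrow> 'c \<Rightarrow> real" where
  "kf lam T g t = (if block_norm T g t = 0 then 0
      else min (lam * sqrt (real (card g)) / block_norm T g t) 1)"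

lemma group_of_eq:
  assumes "is_row_partition P" "g \<in> P" "j \<in> g"
  shows "group_of P j = g"
  unfolding group_of_def
proof (rule the_equality)
  show "g \<in> P \<and> j \<in> g" using assms by auto
  fix h assume "h \<in> P \<and> j \<in> h"
  then show "h = g" using assms unfolding is_row_partition_def by blast
qed

lemma R_block:
  assumes "is_row_partition P" "g \<in> P" "j \<in> g"
  shows "Rstar P lam T $ j $ t = kf lam T g t * T $ j $ t"
  using group_of_eq[OF assms] unfolding Rstar_def kf_def Let_def by simp

lemma bn_nonneg: "block_norm M g t \<ge> 0"
  unfolding block_norm_def by (simp add: sum_nonneg)

lemma bn_sq: "(block_norm M g t)^2 = (\<Sum>j\<in>g. (M $ j $ t)^2)"
  unfolding block_norm_def by (simp add: sum_nonneg)

lemma bn_scale: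
  assumes "\<And>j. j \<in> g \<Longrightarrow> M $ j $ t = a * N $ j $ t"
  shows "block_norm M g t = \<bar>a\<bar> * block_norm N g t"
proof -
  have "(\<Sum>j\<in>g. (M $ j $ t)^2) = a^2 * (\<Sum>j\<in>g. (N $ j $ t)^2)"
    using assms by (simp add: sum_distrib_left power_mult_distrib)
  then show ?thesis unfolding block_norm_def by (simp add: real_sqrt_mult)
qed

lemma bi_CS: "bi A B g t \<le> block_norm A g t * block_norm B g t"
proof -
  have "bi A B g t \<le> (\<Sum>j\<in>g. \<bar>A $ j $ t\<bar> * \<bar>B $ j $ t\<bar>)"
    unfolding bi_def by (rule sum_mono) (metis abs_ge_self abs_mult)
  also have "\<dots> \<le> L2_set (\<lambda>j. A $ j $ t) g * L2_set (\<lambda>j. B $ j $ t) g"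
    by (rule L2_set_mult_ineq)
  finally show ?thesis unfolding block_norm_def L2_set_def .
qed

lemma kf_nonneg: "lam > 0 \<Longrightarrow> kf lam T g t \<ge> 0"
  unfolding kf_def using bn_nonneg[of T g t] by auto

lemma kf_bound: "lam > 0 \<Longrightarrow> kf lam T g t * block_norm T g t \<le> lam * sqrt (real (card g))"
  unfolding kf_def using bn_nonneg[of T g t]
  by (auto simp: min_def field_simps split: if_splits)

lemma blk1:
  assumes "is_row_partition P" "g \<in> P" "lam > 0"
  shows "bi (Rstar P lam T) M g t \<le> lam * sqrt (real (card g)) * block_norm M g t"
proof -
  have "bi (Rstar P lam T) M g t = kf lam T g t * bi T M g t"
    unfolding bi_def sum_distrib_left
    by (rule sum.cong) (simp_all add: R_block[OF assms(1,2)] mult.assoc)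
  also have "\<dots> \<le> kf lam T g t * (block_norm T g t * block_norm M g t)"
    by (rule mult_left_mono[OF bi_CS kf_nonneg[OF assms(3)]])
  also have "\<dots> = (kf lam T g t * block_norm T g t) * block_norm M g t" by simp
  also have "\<dots> \<le> lam * sqrt (real (card g)) * block_norm M g t"
    by (rule mult_right_mono[OF kf_bound[OF assms(3)] bn_nonneg])
  finally show ?thesis .
qed

lemma blk2:
  assumes "is_row_partition P" "g \<in> P" "lam > 0"
  shows "bi (Rstar P lam T) (T - Rstar P lam T) g t
     = lam * sqrt (real (card g)) * block_norm (T - Rstar P lam T) g t"
proof -
  let ?k = "kf lam T g t"
  let ?b = "block_norm T g t"
  let ?c = "lam * sqrt (real (card g))"
  have D: "\<And>j. j \<in> g \<Longrightarrow> (T - Rstar P lam T) $ j $ t = (1 - ?k) * T $ j $ t"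
  proof -
    fix j assume "j \<in> g"
    then have "Rstar P lam T $ j $ t = ?k * T $ j $ t" by (rule R_block[OF assms(1,2)])
    then show "(T - Rstar P lam T) $ j $ t = (1 - ?k) * T $ j $ t" by (simp add: left_diff_distrib)
  qed
  have "bi (Rstar P lam T) (T - Rstar P lam T) g t = ?k * (1 - ?k) * (\<Sum>j\<in>g. (T $ j $ t)^2)"
    unfolding bi_def sum_distrib_left
    by (rule sum.cong) (simp_all add: R_block[OF assms(1,2)] D power2_eq_square algebra_simps)
  also have "\<dots> = ?k * (1 - ?k) * ?b^2" by (simp add: bn_sq)
  finally have L: "bi (Rstar P lam T) (T - Rstar P lam T) g t = ?k * (1 - ?k) * ?b^2" .
  have R: "block_norm (T - Rstar P lam T) g t = \<bar>1 - ?k\<bar> * ?b" by (rule bn_scale[OF D])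
  have c0: "?c \<ge> 0" using assms(3) by simp
  show ?thesis
  proof (cases "?b = 0")
    case True then show ?thesis using L R by simp
  next
    case False
    then have bp: "?b > 0" using bn_nonneg[of T g t] by simp
    show ?thesis
    proof (cases "?c / ?b \<le> 1")
      case True
      then have k: "?k = ?c / ?b" using False unfolding kf_def by simp
      have "?c \<le> ?b" using True bp by (simp add: divide_le_eq)
      then have "1 - ?k \<ge> 0" using True k by simp
      have "?k * ?b = ?c" using k bp by simp
      then have "?k * (1 - ?k) * ?b^2 = ?c * ((1 - ?k) * ?b)"
        by (simp add: power2_eq_square)
      then show ?thesis using L R \<open>1 - ?k \<ge> 0\<close> by simp
    next
      case nt: False
      then have "?k = 1" using False unfolding kf_def by simp
      then show ?thesis using L R by simp
    qed
  qed
qed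

lemma sum_part:
  assumes "is_row_partition P"
  shows "(\<Sum>j\<in>UNIV. h j) = (\<Sum>g\<in>P. \<Sum>j\<in>g. (h j :: real))"
proof -
  have "UNIV = \<Union>P" using assms unfolding is_row_partition_def by auto
  then have "(\<Sum>j\<in>UNIV. h j) = sum h (\<Union>P)" by simp
  also have "\<dots> = (\<Sum>g\<in>P. sum h g)"
    using sum.Union_disjoint[of P h] assms unfolding is_row_partition_def by auto
  finally show ?thesis .
qed

lemma inner_decomp:
  fixes A B :: "real ^ 'c::finite ^ 'p::finite"
  assumes "is_row_partition P"
  shows "inner A B = (\<Sum>g\<in>P. \<Sum>t\<in>UNIV. bi A B g t)"
proof -
  have "inner A B = (\<Sum>j\<in>UNIV. \<Sum>t\<in>UNIV. A $ j $ t * B $ j $ t)"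
    by (simp add: inner_vec_def)
  also have "\<dots> = (\<Sum>g\<in>P. \<Sum>j\<in>g. \<Sum>t\<in>UNIV. A $ j $ t * B $ j $ t)"
    by (rule sum_part[OF assms])
  also have "\<dots> = (\<Sum>g\<in>P. \<Sum>t\<in>UNIV. bi A B g t)"
    unfolding bi_def by (simp add: sum.swap[of _ _ UNIV])
  finally show ?thesis .
qed

lemma gap_decomp:
  fixes M :: "real ^ 'c::finite ^ 'p::finite"
  assumes "is_row_partition P"
  shows "inner (Rstar P lam T) M - lam * grp_norm P M
     = (\<Sum>g\<in>P. \<Sum>t\<in>UNIV. bi (Rstar P lam T) M g t - lam * sqrt (real (card g)) * block_norm M g t)"
  unfolding inner_decomp[OF assms] grp_norm_def
  by (simp add: sum_subtractf sum_distrib_left mult_ac)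

lemma gap_le:
  fixes M :: "real ^ 'c::finite ^ 'p::finite"
  assumes "is_row_partition P" "lam > 0"
  shows "inner (Rstar P lam T) M - lam * grp_norm P M \<le> 0"
  unfolding gap_decomp[OF assms(1)]
  by (intro sum_nonpos) (use blk1[OF assms(1) _ assms(2)] in auto)

lemma gap_eq:
  fixes T :: "real ^ 'c::finite ^ 'p::finite"
  assumes "is_row_partition P" "lam > 0" "a \<ge> 0"
  shows "inner (Rstar P lam T) (a *\<^sub>R (T - Rstar P lam T)) - lam * grp_norm P (a *\<^sub>R (T - Rstar P lam T)) = 0"
  unfolding gap_decomp[OF assms(1)]
proof (intro sum.neutral ballI)
  fix g t assume g: "g \<in> P"
  let ?D = "T - Rstar P lam T"
  have "bi (Rstar P lam T) (a *\<^sub>R ?D) g t = a * bi (Rstar P lam T) ?D g t"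
    unfolding bi_def by (simp add: sum_distrib_left mult_ac)
  moreover have "block_norm (a *\<^sub>R ?D) g t = \<bar>a\<bar> * block_norm ?D g t"
    by (rule bn_scale) simp
  ultimately show "bi (Rstar P lam T) (a *\<^sub>R ?D) g t - lam * sqrt (real (card g)) * block_norm (a *\<^sub>R ?D) g t = 0"
    using blk2[OF assms(1) g assms(2), of T t] assms(3) by (simp add: mult_ac)
qed

theorem mainTheorem5:
  fixes P :: "'p::finite set set" and T :: "real ^ 'c::finite ^ 'p" and lam :: real
  assumes "is_row_partition P"
    and "lam > 0"
    and "T \<noteq> Rstar P lam T"
  shows "{M \<in> unit_frob_ball. \<forall>M'\<in>unit_frob_ball.
            inner T M' - lam * grp_norm P M' \<le> inner T M - lam * grp_norm P M}
         = {(1 / norm (T - Rstar P lam T)) *\<^sub>R (T - Rstar P lam T)}"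
proof -
  define D where "D = T - Rstar P lam T"
  define nD where "nD = norm D"
  define Ms where "Ms = (1 / nD) *\<^sub>R D"
  define f where "f = (\<lambda>M. inner T M - lam * grp_norm P M)"
  have nDp: "nD > 0" using assms(3) unfolding nD_def D_def by simp
  have fsplit: "f M = inner D M + (inner (Rstar P lam T) M - lam * grp_norm P M)" for M
    unfolding f_def D_def by (simp add: inner_diff_left)
  have fle: "f M \<le> inner D M" for M
    using fsplit[of M] gap_le[OF assms(1,2), of T M] by simp
  have nMs: "norm Ms = 1" unfolding Ms_def nD_def using nDp nD_def by simp
  have fMs: "f Ms = nD"
  proof -
    have "f Ms = inner D Ms"
      using fsplit[of Ms] gap_eq[OF assms(1,2), of "1 / nD" T] nDp
      unfolding Ms_def D_def by simp
    also have "\<dots> = nD" unfolding Ms_def nD_def using nDp nD_def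
      by (simp add: power2_norm_eq_inner[symmetric] power2_eq_square)
    finally show ?thesis .
  qed
  have ub: "f M \<le> nD" if "norm M \<le> 1" for M
  proof -
    have "f M \<le> inner D M" by (rule fle)
    also have "\<dots> \<le> nD * norm M" unfolding nD_def by (rule norm_cauchy_schwarz)
    also have "\<dots> \<le> nD" using that nDp by (simp add: mult_left_le)
    finally show ?thesis .
  qed
  have "{M \<in> unit_frob_ball. \<forall>M'\<in>unit_frob_ball. f M' \<le> f M} = {Ms}"
  proof (intro equalityI subsetI)
    fix M assume "M \<in> {M \<in> unit_frob_ball. \<forall>M'\<in>unit_frob_ball. f M' \<le> f M}"
    then have M1: "norm M \<le> 1" and mx: "f Ms \<le> f M"
      using nMs unfolding unit_frob_ball_def by auto
    have iD: "inner D M \<ge> nD" using mx fMs fle[of M] by simp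
    have "(norm (M - Ms))^2 = (norm M)^2 - 2 * inner M Ms + (norm Ms)^2"
      by (simp add: power2_norm_eq_inner inner_diff_left inner_diff_right inner_commute)
    also have "inner M Ms = inner D M / nD" unfolding Ms_def by (simp add: inner_commute)
    finally have e: "(norm (M - Ms))^2 = (norm M)^2 - 2 * (inner D M / nD) + 1" using nMs by simp
    have "inner D M / nD \<ge> 1" using iD nDp by simp
    moreover have "(norm M)^2 \<le> 1" using M1 by (simp add: abs_square_le_1)
    ultimately have "(norm (M - Ms))^2 \<le> 0" using e by linarith
    then have "M = Ms" by simp
    then show "M \<in> {Ms}" by simp
  next
    fix M assume "M \<in> {Ms}"
    then show "M \<in> {M \<in> unit_frob_ball. \<forall>M'\<in>unit_frob_ball. f M' \<le> f M}"
      using nMs ub fMs unfolding unit_frob_ball_def by auto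
  qed
  then show ?thesis unfolding f_def Ms_def nD_def D_def .
qed

end
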